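(* Under the GoRank setting described in the context, for every node $k\in[n]$ and every $t\ge 1$, $$\big|\mathbb{E}[R_k(t)]-r_k\big|\le \frac{\sigma_k}{c\,t},$$ where $c=\lambda_2/|E|$ and $\sigma_k=n^{3/2}\,\phi\big((r_k-1)/n\big)$ with $\phi(u)=\sqrt{u(1-u)}$. In particular $\lim_{t\to\infty}\mathbb{E}[R_k(t)]=r_k$.
   Context: Let $n\ge 2$ and let $\mathcal G=(V,E)$ be a connected, non-bipartite, undirected graph with vertex set $V=[n]$; $\mathbf{L}=\mathbf{D}-\mathbf{A}$ is its Laplacian (degree matrix minus adjacency matrix) and $\lambda_2>0$ the second smallest eigenvalue of $\mathbf{L}$. Node $k$ holds a real observation $X_k$, the $X_k$ being pairwise distinct, and its rank is $r_k=1+\sum_{l=1}^n\mathbb{I}_{\{X_k>X_l\}}$. Algorithm GoRank: initialize $Y_k(0)=X_k$ and $R'_k(0)=0$ for all $k$. At each iteration $s=1,2,\dots$: (i) every node $k$ sets $R'_k(s)=(1-1/s)R'_k(s-1)+(1/s)\,\mathbb{I}_{\{X_k>Y_k(s-1)\}}$ and $R_k(s)=nR'_k(s)+1$; (ii) an edge $(i,j)\in E$ is drawn uniformly at random from $E$, independently of everything before; (iii) the auxiliary values are swapped: $Y_i(s)=Y_j(s-1)$, $Y_j(s)=Y_i(s-1)$, others unchanged. Expectations are over the random edge sampling. *)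

theory Defs
  imports "HOL-Probability.Probability" "Jordan_Normal_Form.Char_Poly"
begin

definition simple_graph :: "nat \<Rightarrow> nat set set \<Rightarrow> bool" where
  "simple_graph n E \<longleftrightarrow> (\<forall>e\<in>E. e \<subseteq> {1..n} \<and> card e = 2)"

definition adj :: "nat set set \<Rightarrow> (nat \<times> nat) set" where
  "adj E = {(u, v). {u, v} \<in> E}"

definition connected_graph :: "nat \<Rightarrow> nat set set \<Rightarrow> bool" where
  "connected_graph n E \<longleftrightarrow> (\<forall>u\<in>{1..n}. \<forall>v\<in>{1..n}. (u, v) \<in> (adj E)\<^sup>*)"

definition bipartite :: "nat \<Rightarrow> nat set set \<Rightarrow> bool" where
  "bipartite n E \<longleftrightarrow> (\<exists>A. A \<subseteq> {1..n} \<and> (\<forall>e\<in>E. card (e \<inter> A) = 1))"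

definition degree :: "nat set set \<Rightarrow> nat \<Rightarrow> nat" where
  "degree E v = card {e\<in>E. v \<in> e}"

text \<open>Laplacian L = D - A as an n x n real matrix; row/column index i corresponds to vertex i+1.\<close>
definition laplacian :: "nat \<Rightarrow> nat set set \<Rightarrow> real mat" where
  "laplacian n E = mat n n (\<lambda>(i, j).
      (if i = j then real (degree E (i + 1)) else 0) - (if {i + 1, j + 1} \<in> E then 1 else 0))"

text \<open>Second smallest eigenvalue, counting algebraic multiplicity (order as root of the
  characteristic polynomial): the least eigenvalue mu such that at least two eigenvalues
  (with multiplicity) are \<le> mu.\<close>
definition second_smallest_eigenvalue :: "real mat \<Rightarrow> real" where
  "second_smallest_eigenvalue M =
     Min {mu. eigenvalue M mu \<and>
              (\<Sum>nu\<in>{nu. eigenvalue M nu \<and> nu \<le> mu}. order nu (char_poly M)) \<ge> 2}"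

definition rank_of :: "nat \<Rightarrow> (nat \<Rightarrow> real) \<Rightarrow> nat \<Rightarrow> nat" where
  "rank_of n X k = 1 + card {l\<in>{1..n}. X k > X l}"

definition swap_edge :: "nat set \<Rightarrow> (nat \<Rightarrow> real) \<Rightarrow> (nat \<Rightarrow> real)" where
  "swap_edge e Y = (\<lambda>v. if v \<in> e then Y (the_elem (e - {v})) else Y v)"

text \<open>Joint law of the state (Y(s), R'(s)) of GoRank after s iterations.\<close>
fun gorank :: "nat set set \<Rightarrow> (nat \<Rightarrow> real) \<Rightarrow> nat \<Rightarrow> ((nat \<Rightarrow> real) \<times> (nat \<Rightarrow> real)) pmf" where
  "gorank E X 0 = return_pmf (X, (\<lambda>_. 0))"
| "gorank E X (Suc s) = bind_pmf (gorank E X s) (\<lambda>(Y, R').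
      map_pmf (\<lambda>e. (swap_edge e Y,
                     (\<lambda>k. (1 - 1 / real (Suc s)) * R' k
                          + (1 / real (Suc s)) * (if X k > Y k then 1 else 0))))
              (pmf_of_set E))"

definition expected_rank :: "nat \<Rightarrow> nat set set \<Rightarrow> (nat \<Rightarrow> real) \<Rightarrow> nat \<Rightarrow> nat \<Rightarrow> real" where
  "expected_rank n E X k t =
     measure_pmf.expectation (gorank E X t) (\<lambda>(Y, R'). real n * R' k + 1)"

definition phi :: "real \<Rightarrow> real" where
  "phi u = sqrt (u * (1 - u))"

end

theory Submission
  imports Defs "Jordan_Normal_Form.Schur_Decomposition"
begin

unbundle no vec_syntax

lemma sym_real_eigenvalue:
  fixes A :: "real mat"
  assumes A: "A \<in> carrier_mat n n" and sym: "transpose_mat A = A" and n: "n > 0"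
  shows "\<exists>e. eigenvalue A e"
proof -
  define Ac :: "complex mat" where "Ac = of_real_hom.mat_hom A"
  have Ac: "Ac \<in> carrier_mat n n" using A unfolding Ac_def by auto
  obtain as where cp: "char_poly Ac = (\<Prod>a\<leftarrow>as. [:- a, 1:])" and len: "length as = n"
    using char_poly_factorized[OF Ac] by auto
  obtain z zs where as: "as = z # zs" using len n by (cases as) auto
  have "poly (char_poly Ac) z = 0" unfolding cp as by simp
  hence "eigenvalue Ac z" using eigenvalue_root_char_poly[OF Ac] by simp
  then obtain v where ev: "eigenvector Ac v z" unfolding eigenvalue_def by auto
  hence v: "v \<in> carrier_vec n" and v0: "v \<noteq> 0\<^sub>v n" and Av: "Ac *\<^sub>v v = z \<cdot>\<^sub>v v"
    using Ac unfolding eigenvector_def by auto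
  have Aij: "Ac $$ (i,j) = complex_of_real (A $$ (i,j))" if "i < n" "j < n" for i j
    using that A unfolding Ac_def by auto
  have Asym: "A $$ (i,j) = A $$ (j,i)" if "i < n" "j < n" for i j
    using that A sym by (metis carrier_matD(1) carrier_matD(2) index_transpose_mat(1))
  define s where "s = (\<Sum>i<n. \<Sum>j<n. cnj (v $ i) * Ac $$ (i,j) * v $ j)"
  define N where "N = (\<Sum>i<n. cmod (v $ i) ^ 2)"
  have rowi: "(\<Sum>j<n. Ac $$ (i,j) * v $ j) = z * v $ i" if "i < n" for i
  proof -
    have "(Ac *\<^sub>v v) $ i = z * v $ i" using Av that v by simp
    moreover have "(Ac *\<^sub>v v) $ i = (\<Sum>j<n. Ac $$ (i,j) * v $ j)"
      using that Ac v by (simp add: scalar_prod_def row_def atLeast0LessThan)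
    ultimately show ?thesis by simp
  qed
  have "s = (\<Sum>i<n. cnj (v $ i) * (\<Sum>j<n. Ac $$ (i,j) * v $ j))"
    unfolding s_def by (simp add: sum_distrib_left mult.assoc)
  also have "\<dots> = (\<Sum>i<n. z * (cnj (v $ i) * v $ i))"
    by (rule sum.cong, simp, subst rowi, auto)
  also have "\<dots> = z * complex_of_real N"
  proof -
    have "cnj (v $ i) * v $ i = complex_of_real (cmod (v $ i) ^ 2)" for i
      by (simp add: complex_norm_square mult.commute del: of_real_power)
    thus ?thesis unfolding N_def by (simp add: sum_distrib_left)
  qed
  finally have s1: "s = z * complex_of_real N" .
  have "cnj s = (\<Sum>i<n. \<Sum>j<n. v $ i * Ac $$ (i,j) * cnj (v $ j))"
    unfolding s_def by (auto intro!: sum.cong simp: Aij)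
  also have "\<dots> = (\<Sum>j<n. \<Sum>i<n. v $ i * Ac $$ (i,j) * cnj (v $ j))"
    by (rule sum.swap)
  also have "\<dots> = s" unfolding s_def
    by (auto intro!: sum.cong simp: Aij Asym mult.commute mult.left_commute)
  finally have s2: "cnj s = s" .
  have "N > 0"
  proof -
    obtain i where i: "i < n" "v $ i \<noteq> 0" using v v0 by (metis eq_vecI carrier_vecD index_zero_vec)
    have "cmod (v $ i) ^ 2 > 0" using i by simp
    moreover have "cmod (v $ i) ^ 2 \<le> N" unfolding N_def
      by (rule member_le_sum) (use i in auto)
    ultimately show ?thesis by linarith
  qed
  have "Im z = 0"
  proof -
    have "Im s = 0" using arg_cong[OF s2, of Im] by simp
    hence "Im z * N = 0" unfolding s1 by simp
    thus ?thesis using \<open>N > 0\<close> by simp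
  qed
  hence zr: "z = complex_of_real (Re z)" by (simp add: complex_eq_iff)
  have "poly (char_poly Ac) (complex_of_real (Re z)) = 0" using \<open>poly (char_poly Ac) z = 0\<close> zr by simp
  hence "complex_of_real (poly (char_poly A) (Re z)) = 0"
    unfolding Ac_def of_real_hom.char_poly_hom[OF A] by simp
  hence "poly (char_poly A) (Re z) = 0" by simp
  thus ?thesis using eigenvalue_root_char_poly[OF A] by blast
qed

lemma real_cscalar: fixes v w :: "real vec" shows "v \<bullet>c w = v \<bullet> w"
  by (simp add: conjugate_vec_def scalar_prod_def)

lemma mult_entry:
  assumes "X \<in> carrier_mat a b" "Y \<in> carrier_mat b c" "i < a" "j < c"
  shows "(X * Y) $$ (i,j) = (\<Sum>k<b. X $$ (i,k) * Y $$ (k,j))"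
  using assms by (simp add: scalar_prod_def atLeast0LessThan)

definition diagm :: "nat \<Rightarrow> (nat \<Rightarrow> real) \<Rightarrow> real mat" where
  "diagm n d = mat n n (\<lambda>(i,j). if i = j then d i else 0)"

lemma diagm_carrier[simp]: "diagm n d \<in> carrier_mat n n" unfolding diagm_def by simp

lemma udu_entry:
  assumes U: "U \<in> carrier_mat n n" and i: "i < n" and j: "j < n"
  shows "(U * diagm n d * transpose_mat U) $$ (i,j) = (\<Sum>k<n. U $$ (i,k) * d k * U $$ (j,k))"
proof -
  have UD: "U * diagm n d \<in> carrier_mat n n" using U by simp
  have e1: "(U * diagm n d) $$ (i,k) = U $$ (i,k) * d k" if "i < n" "k < n" for i k
  proof -
    have "(U * diagm n d) $$ (i,k) = (\<Sum>l<n. U $$ (i,l) * diagm n d $$ (l,k))"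
      by (rule mult_entry[OF U diagm_carrier that])
    also have "\<dots> = (\<Sum>l<n. if l = k then U $$ (i,k) * d k else 0)"
      by (rule sum.cong, simp, use that in \<open>auto simp: diagm_def\<close>)
    also have "\<dots> = U $$ (i,k) * d k" using that by simp
    finally show ?thesis .
  qed
  have "(U * diagm n d * transpose_mat U) $$ (i,j) = (\<Sum>k<n. (U * diagm n d) $$ (i,k) * transpose_mat U $$ (k,j))"
    by (rule mult_entry[OF UD _ i j], use U in auto)
  also have "\<dots> = (\<Sum>k<n. U $$ (i,k) * d k * U $$ (j,k))"
    by (rule sum.cong, simp, use U i j e1 in auto)
  finally show ?thesis .
qed

lemma orthonormal_completion:
  fixes v :: "real vec"
  assumes v: "v \<in> carrier_vec n" and v1: "v \<bullet> v = 1"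
  shows "\<exists>W. W \<in> carrier_mat n n \<and> col W 0 = v \<and> transpose_mat W * W = 1\<^sub>m n"
proof -
  interpret cof_vec_space n "TYPE(real)" .
  have v0: "v \<noteq> 0\<^sub>v n" using v1 v by auto
  define b where "b = basis_completion v"
  from basis_completion[OF v v0, folded b_def]
  have dist_b: "distinct b" and indep: "\<not> lin_dep (set b)" and bc: "set b \<subseteq> carrier_vec n"
    and hdb: "hd b = v" and len_b: "length b = n" by auto
  have n: "n > 0" using v0 v by (metis carrier_vecD eq_vecI gr0I index_zero_vec(2) less_nat_zero_code)
  from hdb len_b n obtain vs where bv: "b = v # vs" by (cases b, auto)
  define ws where "ws = gram_schmidt n b"
  from gram_schmidt_result[OF bc dist_b indep ws_def]
  have wsc: "set ws \<subseteq> carrier_vec n" and orth: "corthogonal ws" and len: "length ws = n"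
    by (auto simp: len_b)
  have hdws: "hd ws = v" unfolding ws_def bv using gram_schmidt_hd[OF v] by simp
  define ws' where "ws' = map (\<lambda>w. (1 / sqrt (w \<bullet> w)) \<cdot>\<^sub>v w) ws"
  define W where "W = mat_of_cols n ws'"
  have len': "length ws' = n" unfolding ws'_def using len by simp
  have wsc': "ws' ! i \<in> carrier_vec n" if "i < n" for i
    using that wsc len unfolding ws'_def by auto
  have W: "W \<in> carrier_mat n n" unfolding W_def using len' mat_of_cols_carrier(1)[of n ws'] by simp
  have colW: "col W i = ws' ! i" if "i < n" for i
    unfolding W_def using that len' wsc' by simp
  have dot: "ws' ! i \<bullet> ws' ! j = (if i = j then 1 else 0)" if "i < n" "j < n" for i j
  proof -
    have ci: "ws ! i \<in> carrier_vec n" "ws ! j \<in> carrier_vec n" using that wsc len by auto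
    have oij: "ws ! i \<bullet> ws ! j = 0 \<longleftrightarrow> i \<noteq> j"
      using corthogonalD[OF orth, of i j] that len by (simp add: real_cscalar)
    have pos: "ws ! i \<bullet> ws ! i \<ge> 0" by (simp add: scalar_prod_def sum_nonneg)
    have "ws' ! i \<bullet> ws' ! j = (1 / sqrt (ws ! i \<bullet> ws ! i)) * (1 / sqrt (ws ! j \<bullet> ws ! j)) * (ws ! i \<bullet> ws ! j)"
      unfolding ws'_def using that len ci by simp
    moreover have "i = j \<Longrightarrow> (1 / sqrt (ws ! i \<bullet> ws ! i)) * (1 / sqrt (ws ! i \<bullet> ws ! i)) * (ws ! i \<bullet> ws ! i) = 1"
      using oij pos by (simp add: field_simps)
    ultimately show ?thesis using oij by auto
  qed
  have "transpose_mat W * W = 1\<^sub>m n"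
    by (rule eq_matI, use W in \<open>auto simp: colW dot\<close>)
  moreover have "col W 0 = v" using colW[OF n] unfolding ws'_def using hdws len n v1
    by (cases ws, auto)
  ultimately show ?thesis using W by blast
qed


lemma real_dot_self_pos:
  fixes v :: "real vec"
  assumes v: "v \<in> carrier_vec n" and v0: "v \<noteq> 0\<^sub>v n"
  shows "v \<bullet> v > 0"
proof -
  have ge: "v \<bullet> v \<ge> 0" by (simp add: scalar_prod_def sum_nonneg)
  have "v \<bullet> v \<noteq> 0"
  proof
    assume "v \<bullet> v = 0"
    hence "(\<Sum>i\<in>{0..<n}. v $ i * v $ i) = 0" using v by (simp add: scalar_prod_def)
    hence "\<forall>i\<in>{0..<n}. v $ i * v $ i = 0" by (subst (asm) sum_nonneg_eq_0_iff) auto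
    hence "v = 0\<^sub>v n" using v by (intro eq_vecI) auto
    thus False using v0 by simp
  qed
  thus ?thesis using ge by simp
qed

lemma spectral_real:
  fixes A :: "real mat"
  assumes "A \<in> carrier_mat n n" "transpose_mat A = A"
  shows "\<exists>U d. U \<in> carrier_mat n n \<and> transpose_mat U * U = 1\<^sub>m n \<and> A = U * diagm n d * transpose_mat U"
  using assms
proof (induction n arbitrary: A)
  case 0
  have "A = 1\<^sub>m 0 * diagm 0 (\<lambda>_. 0) * transpose_mat (1\<^sub>m 0)"
    by (rule eq_matI, use 0 in auto)
  thus ?case by (intro exI[of _ "1\<^sub>m 0"] exI[of _ "\<lambda>_. 0"]) auto
next
  case (Suc m A)
  let ?n = "Suc m"
  have A: "A \<in> carrier_mat ?n ?n" and sym: "transpose_mat A = A" using Suc.prems by auto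
  obtain e where "eigenvalue A e" using sym_real_eigenvalue[OF A sym] by auto
  then obtain v where "eigenvector A v e" unfolding eigenvalue_def by auto
  hence v: "v \<in> carrier_vec ?n" and v0: "v \<noteq> 0\<^sub>v ?n" and Av: "A *\<^sub>v v = e \<cdot>\<^sub>v v"
    using A unfolding eigenvector_def by auto
  have vpos: "v \<bullet> v > 0" by (rule real_dot_self_pos[OF v v0])
  define v' where "v' = (1 / sqrt (v \<bullet> v)) \<cdot>\<^sub>v v"
  have v': "v' \<in> carrier_vec ?n" unfolding v'_def using v by simp
  have v'1: "v' \<bullet> v' = 1" unfolding v'_def using v vpos by simp
  have Av': "A *\<^sub>v v' = e \<cdot>\<^sub>v v'" unfolding v'_def using A v Av
    by (simp add: mult_mat_vec smult_smult_assoc mult.commute)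
  obtain W where W: "W \<in> carrier_mat ?n ?n" and W0: "col W 0 = v'" and WtW: "transpose_mat W * W = 1\<^sub>m ?n"
    using orthonormal_completion[OF v' v'1] by auto
  have WWt: "W * transpose_mat W = 1\<^sub>m ?n"
    by (rule mat_mult_left_right_inverse[OF _ W WtW]) (use W in simp)
  define A' where "A' = transpose_mat W * A * W"
  have A': "A' \<in> carrier_mat ?n ?n" unfolding A'_def using W A by simp
  have colorth: "col W i \<bullet> col W j = (if i = j then 1 else 0)" if "i < ?n" "j < ?n" for i j
  proof -
    have "(transpose_mat W * W) $$ (i,j) = col W i \<bullet> col W j" using that W by simp
    thus ?thesis unfolding WtW using that by simp
  qed
  have A'e: "A' $$ (i,j) = col W i \<bullet> (A *\<^sub>v col W j)" if "i < ?n" "j < ?n" for i j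
  proof -
    have "A' = transpose_mat W * (A * W)" unfolding A'_def using W A by simp
    thus ?thesis using that W A by (simp add: mult_mat_vec_def)
  qed
  have A'sym: "transpose_mat A' = A'"
  proof -
    have t1: "transpose_mat (transpose_mat W * A * W) = transpose_mat W * transpose_mat (transpose_mat W * A)"
      using W A by (subst transpose_mult[of _ ?n ?n]) auto
    have t2: "transpose_mat (transpose_mat W * A) = transpose_mat A * W"
      using W A by (subst transpose_mult[of _ ?n ?n]) auto
    show ?thesis unfolding A'_def t1 t2 sym using W A by simp
  qed
  have A'symE: "A' $$ (i,j) = A' $$ (j,i)" if "i < ?n" "j < ?n" for i j
    using that A' A'sym by (metis carrier_matD(1) carrier_matD(2) index_transpose_mat(1))
  have A'0: "A' $$ (i,0) = (if i = 0 then e else 0)" if "i < ?n" for i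
  proof -
    have "A' $$ (i,0) = col W i \<bullet> (e \<cdot>\<^sub>v v')" using A'e[OF that] W0 Av' by simp
    also have "\<dots> = e * (col W i \<bullet> col W 0)" using W0 v' W that by simp
    finally show ?thesis using colorth[OF that, of 0] by simp
  qed
  define A3 where "A3 = mat m m (\<lambda>(i,j). A' $$ (Suc i, Suc j))"
  have A3: "A3 \<in> carrier_mat m m" unfolding A3_def by simp
  have A3sym: "transpose_mat A3 = A3"
    by (rule eq_matI, auto simp: A3_def A'symE)
  obtain U3 d3 where U3: "U3 \<in> carrier_mat m m" and U3o: "transpose_mat U3 * U3 = 1\<^sub>m m"
    and A3d: "A3 = U3 * diagm m d3 * transpose_mat U3"
    using Suc.IH[OF A3 A3sym] by auto
  have U3o_e: "(\<Sum>k<m. U3 $$ (k,i) * U3 $$ (k,j)) = (if i = j then 1 else 0)" if "i < m" "j < m" for i j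
  proof -
    have "(transpose_mat U3 * U3) $$ (i,j) = (\<Sum>k<m. transpose_mat U3 $$ (i,k) * U3 $$ (k,j))"
      by (rule mult_entry[OF _ U3 that]) (use U3 in simp)
    also have "\<dots> = (\<Sum>k<m. U3 $$ (k,i) * U3 $$ (k,j))"
      by (rule sum.cong) (use U3 that in auto)
    finally show ?thesis unfolding U3o using that by simp
  qed
  have A3e: "A' $$ (Suc i, Suc j) = (\<Sum>k<m. U3 $$ (i,k) * d3 k * U3 $$ (j,k))" if "i < m" "j < m" for i j
  proof -
    have "A' $$ (Suc i, Suc j) = A3 $$ (i,j)" unfolding A3_def using that by simp
    also have "\<dots> = (\<Sum>k<m. U3 $$ (i,k) * d3 k * U3 $$ (j,k))"
      unfolding A3d by (rule udu_entry[OF U3 that])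
    finally show ?thesis .
  qed
  define B where "B = mat ?n ?n (\<lambda>(i,j). if i = 0 \<and> j = 0 then 1 else if i = 0 \<or> j = 0 then 0 else U3 $$ (i-1, j-1))"
  define d where "d = (\<lambda>i. if i = 0 then e else d3 (i - 1))"
  have B: "B \<in> carrier_mat ?n ?n" unfolding B_def by simp
  have BtB: "transpose_mat B * B = 1\<^sub>m ?n"
  proof (rule eq_matI)
    fix i j assume i: "i < dim_row (1\<^sub>m ?n)" and j: "j < dim_col (1\<^sub>m ?n)"
    hence i: "i < ?n" and j: "j < ?n" by auto
    have "(transpose_mat B * B) $$ (i,j) = (\<Sum>k<?n. transpose_mat B $$ (i,k) * B $$ (k,j))"
      by (rule mult_entry[OF _ B i j]) (use B in simp)
    also have "\<dots> = (\<Sum>k<?n. B $$ (k,i) * B $$ (k,j))"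
      by (rule sum.cong) (use B i j in auto)
    also have "\<dots> = B $$ (0,i) * B $$ (0,j) + (\<Sum>k<m. B $$ (Suc k,i) * B $$ (Suc k,j))"
      by (rule sum.lessThan_Suc_shift)
    also have "\<dots> = 1\<^sub>m ?n $$ (i,j)"
    proof (cases "i = 0 \<or> j = 0")
      case True
      thus ?thesis using i j by (auto simp: B_def)
    next
      case False
      then obtain i' j' where ij: "i = Suc i'" "j = Suc j'" by (cases i; cases j) auto
      have "(\<Sum>k<m. B $$ (Suc k,i) * B $$ (Suc k,j)) = (\<Sum>k<m. U3 $$ (k,i') * U3 $$ (k,j'))"
        by (rule sum.cong) (use i j ij in \<open>auto simp: B_def\<close>)
      thus ?thesis using U3o_e[of i' j'] i j ij by (auto simp: B_def)
    qed
    finally show "(transpose_mat B * B) $$ (i,j) = 1\<^sub>m ?n $$ (i,j)" .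
  qed (use B in auto)
  have BDB: "B * diagm ?n d * transpose_mat B = A'"
  proof (rule eq_matI)
    fix i j assume i: "i < dim_row A'" and j: "j < dim_col A'"
    hence i: "i < ?n" and j: "j < ?n" using A' by auto
    have "(B * diagm ?n d * transpose_mat B) $$ (i,j) = (\<Sum>k<?n. B $$ (i,k) * d k * B $$ (j,k))"
      by (rule udu_entry[OF B i j])
    also have "\<dots> = B $$ (i,0) * d 0 * B $$ (j,0) + (\<Sum>k<m. B $$ (i,Suc k) * d (Suc k) * B $$ (j,Suc k))"
      by (rule sum.lessThan_Suc_shift)
    also have "\<dots> = A' $$ (i,j)"
    proof (cases "i = 0 \<or> j = 0")
      case True
      thus ?thesis using i j A'0 A'symE[of i j] by (auto simp: B_def d_def)
    next
      case False
      then obtain i' j' where ij: "i = Suc i'" "j = Suc j'" by (cases i; cases j) auto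
      have "(\<Sum>k<m. B $$ (i,Suc k) * d (Suc k) * B $$ (j,Suc k)) = (\<Sum>k<m. U3 $$ (i',k) * d3 k * U3 $$ (j',k))"
        by (rule sum.cong) (use i j ij in \<open>auto simp: B_def d_def\<close>)
      thus ?thesis using A3e[of i' j'] i j ij by (auto simp: B_def)
    qed
    finally show "(B * diagm ?n d * transpose_mat B) $$ (i,j) = A' $$ (i,j)" .
  qed (use B A' in auto)
  define U where "U = W * B"
  have U: "U \<in> carrier_mat ?n ?n" unfolding U_def using W B by simp
  have Wt: "transpose_mat W \<in> carrier_mat ?n ?n" and Bt: "transpose_mat B \<in> carrier_mat ?n ?n"
    using W B by auto
  have UT: "transpose_mat U = transpose_mat B * transpose_mat W"
    unfolding U_def using W B by (simp add: transpose_mult[of _ ?n ?n])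
  have "transpose_mat U * U = transpose_mat B * (transpose_mat W * W) * B"
    unfolding UT unfolding U_def using W B Wt Bt by (simp add: assoc_mult_mat[of _ ?n ?n _ ?n _ ?n] mult_carrier_mat[of _ ?n ?n _ ?n])
  also have "\<dots> = 1\<^sub>m ?n" unfolding WtW using B BtB by simp
  finally have UtU: "transpose_mat U * U = 1\<^sub>m ?n" .
  have "U * diagm ?n d * transpose_mat U = W * (B * diagm ?n d * transpose_mat B) * transpose_mat W"
    unfolding UT unfolding U_def using W B Wt Bt by (simp add: assoc_mult_mat[of _ ?n ?n _ ?n _ ?n] mult_carrier_mat[of _ ?n ?n _ ?n])
  also have "\<dots> = (W * transpose_mat W) * A * (W * transpose_mat W)"
    unfolding BDB A'_def using W A Wt by (simp add: assoc_mult_mat[of _ ?n ?n _ ?n _ ?n] mult_carrier_mat[of _ ?n ?n _ ?n])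
  also have "\<dots> = A" unfolding WWt using A by simp
  finally show ?case using U UtU by blast
qed



definition sig :: "nat set \<Rightarrow> nat \<Rightarrow> nat" where
  "sig e k = (if k \<in> e then the_elem (e - {k}) else k)"

definition Lop :: "nat set set \<Rightarrow> (nat \<Rightarrow> real) \<Rightarrow> nat \<Rightarrow> real" where
  "Lop E f k = (\<Sum>e\<in>{e\<in>E. k \<in> e}. f k - f (sig e k))"

definition Top :: "nat set set \<Rightarrow> (nat \<Rightarrow> real) \<Rightarrow> nat \<Rightarrow> real" where
  "Top E f k = (\<Sum>e\<in>E. f (sig e k)) / real (card E)"

lemma sig_pair: "a \<noteq> b \<Longrightarrow> sig {a,b} a = b \<and> sig {a,b} b = a"
  unfolding sig_def by (auto simp: insert_Diff_if)

lemma edge_struct: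
  assumes "simple_graph n E" "e \<in> E"
  shows "\<exists>a b. e = {a,b} \<and> a \<noteq> b \<and> a \<in> {1..n} \<and> b \<in> {1..n}"
proof -
  have "e \<subseteq> {1..n}" "card e = 2" using assms unfolding simple_graph_def by auto
  then obtain a b where "e = {a,b}" "a \<noteq> b" by (meson card_2_iff)
  thus ?thesis using \<open>e \<subseteq> {1..n}\<close> by auto
qed

lemma finite_E: "simple_graph n E \<Longrightarrow> finite E"
  unfolding simple_graph_def
  by (rule finite_subset[of _ "Pow {1..n}"]) auto

lemma sig_in:
  assumes "simple_graph n E" "e \<in> E" "k \<in> {1..n}"
  shows "sig e k \<in> {1..n}"
  using edge_struct[OF assms(1,2)] assms(3) sig_pair by (auto simp: sig_def)

lemma sum_1n: "(\<Sum>v\<in>{1..n}. h v) = (\<Sum>r<n. h (Suc r)) "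
proof -
  have "{1..n} = Suc ` {..<n}" by (simp add: image_Suc_lessThan)
  thus ?thesis by (simp add: sum.reindex)
qed

lemma Top_Lop:
  assumes "finite E" "E \<noteq> {}"
  shows "Top E f k = f k - Lop E f k / real (card E)"
proof -
  have "(\<Sum>e\<in>E. f (sig e k)) = (\<Sum>e\<in>E. f k - (if k \<in> e then f k - f (sig e k) else 0))"
    by (rule sum.cong) (auto simp: sig_def)
  also have "\<dots> = real (card E) * f k - (\<Sum>e\<in>E. (if k \<in> e then f k - f (sig e k) else 0))"
    unfolding sum_subtractf by simp
  also have "(\<Sum>e\<in>E. (if k \<in> e then f k - f (sig e k) else 0)) = Lop E f k"
    unfolding Lop_def using assms(1) by (simp add: sum.inter_filter)
  finally show ?thesis unfolding Top_def using assms by (simp add: field_simps)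
qed

lemma edge_term:
  fixes f g :: "nat \<Rightarrow> real"
  assumes "a \<noteq> b"
  shows "(\<Sum>k\<in>{a,b}. f k * (g k - g (sig {a,b} k))) = (f a - f b) * (g a - g b)"
proof -
  have "(\<Sum>k\<in>{a,b}. f k * (g k - g (sig {a,b} k))) = f a * (g a - g b) + f b * (g b - g a)"
    using assms sig_pair[OF assms] by simp
  also have "\<dots> = (f a - f b) * (g a - g b)" by (simp add: algebra_simps)
  finally show ?thesis .
qed

lemma bil:
  assumes sg: "simple_graph n E"
  shows "(\<Sum>v\<in>{1..n}. f v * Lop E g v) = (\<Sum>e\<in>E. \<Sum>k\<in>e. f k * (g k - g (sig e k)))"
proof -
  have fin: "finite E" by (rule finite_E[OF sg])
  have "(\<Sum>v\<in>{1..n}. f v * Lop E g v) = (\<Sum>v\<in>{1..n}. \<Sum>e\<in>{e. e \<in> E \<and> v \<in> e}. f v * (g v - g (sig e v)))"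
    unfolding Lop_def by (simp add: sum_distrib_left)
  also have "\<dots> = (\<Sum>e\<in>E. \<Sum>v\<in>{v. v \<in> {1..n} \<and> v \<in> e}. f v * (g v - g (sig e v)))"
    by (rule sum.swap_restrict) (use fin in auto)
  also have "\<dots> = (\<Sum>e\<in>E. \<Sum>k\<in>e. f k * (g k - g (sig e k)))"
  proof (rule sum.cong)
    fix e assume "e \<in> E"
    hence "e \<subseteq> {1..n}" using sg unfolding simple_graph_def by auto
    hence "{v. v \<in> {1..n} \<and> v \<in> e} = e" by auto
    thus "(\<Sum>v\<in>{v. v \<in> {1..n} \<and> v \<in> e}. f v * (g v - g (sig e v))) = (\<Sum>k\<in>e. f k * (g k - g (sig e k)))"
      by simp
  qed simp
  finally show ?thesis .
qed

lemma bil_edges: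
  assumes sg: "simple_graph n E"
  shows "(\<Sum>v\<in>{1..n}. f v * Lop E g v) = (\<Sum>e\<in>E. (f (SOME a. \<exists>b. e = {a,b} \<and> a \<noteq> b) - f (sig e (SOME a. \<exists>b. e = {a,b} \<and> a \<noteq> b)))
      * (g (SOME a. \<exists>b. e = {a,b} \<and> a \<noteq> b) - g (sig e (SOME a. \<exists>b. e = {a,b} \<and> a \<noteq> b))))"
  unfolding bil[OF sg]
proof (rule sum.cong)
  fix e assume e: "e \<in> E"
  define a where "a = (SOME a. \<exists>b. e = {a,b} \<and> a \<noteq> b)"
  have "\<exists>a b. e = {a,b} \<and> a \<noteq> b" using edge_struct[OF sg e] by blast
  hence "\<exists>b. e = {a,b} \<and> a \<noteq> b" unfolding a_def by (rule someI_ex[where P = "\<lambda>a. \<exists>b. e = {a,b} \<and> a \<noteq> b", OF exE]) blast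
  then obtain b where eb: "e = {a,b}" "a \<noteq> b" by auto
  show "(\<Sum>k\<in>e. f k * (g k - g (sig e k))) = (f a - f (sig e a)) * (g a - g (sig e a))"
    using edge_term[OF eb(2), of f g] sig_pair[OF eb(2)] eb by simp
qed simp

lemma L_Lop:
  assumes sg: "simple_graph n E" and r: "r < n"
  shows "(\<Sum>j<n. laplacian n E $$ (r,j) * f (Suc j)) = Lop E f (Suc r)"
proof -
  have fin: "finite E" by (rule finite_E[OF sg])
  let ?k = "Suc r"
  have nk: "{?k} \<notin> E" using sg unfolding simple_graph_def by fastforce
  have "(\<Sum>j<n. laplacian n E $$ (r,j) * f (Suc j))
      = (\<Sum>j<n. (if r = j then real (degree E ?k) * f ?k else 0) - (if {?k, Suc j} \<in> E then f (Suc j) else 0))"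
    by (rule sum.cong) (use r nk in \<open>auto simp: laplacian_def\<close>)
  also have "\<dots> = real (degree E ?k) * f ?k - (\<Sum>j\<in>{j. j < n \<and> {?k, Suc j} \<in> E}. f (Suc j))"
    using r nk by (simp add: sum_subtractf sum.inter_filter[symmetric] lessThan_def)
  also have "(\<Sum>j\<in>{j. j < n \<and> {?k, Suc j} \<in> E}. f (Suc j)) = (\<Sum>e\<in>{e\<in>E. ?k \<in> e}. f (sig e ?k))"
  proof (rule sum.reindex_bij_witness[where j = "\<lambda>j. {?k, Suc j}" and i = "\<lambda>e. sig e ?k - 1"])
    fix j assume j: "j \<in> {j. j < n \<and> {?k, Suc j} \<in> E}"
    have "card {?k, Suc j} = 2" using j sg unfolding simple_graph_def by auto
    hence ne: "?k \<noteq> Suc j" by auto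
    show "sig {?k, Suc j} ?k - 1 = j" using sig_pair[OF ne] by simp
    show "{?k, Suc j} \<in> {e\<in>E. ?k \<in> e}" using j by auto
    show "f (sig {?k, Suc j} ?k) = f (Suc j)" using sig_pair[OF ne] by simp
  next
    fix e assume e: "e \<in> {e\<in>E. ?k \<in> e}"
    then obtain a b where ab: "e = {a,b}" "a \<noteq> b" "a \<in> {1..n}" "b \<in> {1..n}"
      using edge_struct[OF sg] by blast
    have s: "sig e ?k \<in> e" "sig e ?k \<noteq> ?k" "e = {?k, sig e ?k}" "sig e ?k \<in> {1..n}"
      using e ab sig_pair[OF ab(2)] by auto
    show "{?k, Suc (sig e ?k - 1)} = e" using s by auto
    show "sig e ?k - 1 \<in> {j. j < n \<and> {?k, Suc j} \<in> E}" using s e by auto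
  qed
  also have "real (degree E ?k) * f ?k - (\<Sum>e\<in>{e\<in>E. ?k \<in> e}. f (sig e ?k)) = Lop E f ?k"
    unfolding Lop_def degree_def using fin by (simp add: sum_subtractf)
  finally show ?thesis .
qed


lemma swap_sig: "swap_edge e Y k = Y (sig e k)"
  unfolding swap_edge_def sig_def by simp

lemma gorank_fin:
  assumes "finite E" "E \<noteq> {}"
  shows "finite (set_pmf (gorank E X s))"
proof (induction s)
  case 0
  then show ?case by simp
next
  case (Suc s)
  show ?case unfolding gorank.simps set_bind_pmf
    by (rule finite_UN_I[OF Suc]) (use assms in \<open>auto split: prod.splits\<close>)
qed

lemma exp_bind:
  fixes h :: "'b \<Rightarrow> real"
  assumes "finite (set_pmf p)" "\<And>x. x \<in> set_pmf p \<Longrightarrow> finite (set_pmf (f x))"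
  shows "measure_pmf.expectation (bind_pmf p f) h = measure_pmf.expectation p (\<lambda>x. measure_pmf.expectation (f x) h)"
proof -
  have "measure_pmf.expectation (bind_pmf p f) h = (\<Sum>a\<in>set_pmf p. pmf p a *\<^sub>R measure_pmf.expectation (f a) h)"
    by (rule pmf_expectation_bind) (use assms in auto)
  also have "\<dots> = measure_pmf.expectation p (\<lambda>x. measure_pmf.expectation (f x) h)"
    by (rule integral_measure_pmf[symmetric]) (use assms in auto)
  finally show ?thesis .
qed

lemma gorank_Y:
  assumes fin: "finite E" and ne: "E \<noteq> {}"
  shows "measure_pmf.expectation (gorank E X s) (\<lambda>(Y,R). g (Y k)) = (Top E ^^ s) (\<lambda>v. g (X v)) k"
proof (induction s arbitrary: k)
  case 0
  then show ?case by simp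
next
  case (Suc s)
  let ?p = "gorank E X s"
  have finp: "finite (set_pmf ?p)" by (rule gorank_fin[OF fin ne])
  have int: "integrable (measure_pmf ?p) h" for h :: "_ \<Rightarrow> real"
    by (rule integrable_measure_pmf_finite[OF finp])
  have "measure_pmf.expectation (gorank E X (Suc s)) (\<lambda>(Y,R). g (Y k))
      = measure_pmf.expectation ?p (\<lambda>x. (\<Sum>e\<in>E. (\<lambda>(Y,R). g (Y (sig e k))) x) / real (card E))"
    unfolding gorank.simps
  proof (subst exp_bind[OF finp], goal_cases)
    case (1 x)
    then show ?case using fin ne by (auto split: prod.splits)
  next
    case 2
    show ?case
    proof (rule Bochner_Integration.integral_cong[OF refl])
      fix x :: "(nat \<Rightarrow> real) \<times> (nat \<Rightarrow> real)"
      obtain Y R where x: "x = (Y,R)" by (cases x)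
      show "measure_pmf.expectation (case x of (Y, R') \<Rightarrow> map_pmf (\<lambda>e. (swap_edge e Y,
                     (\<lambda>k. (1 - 1 / real (Suc s)) * R' k
                          + (1 / real (Suc s)) * (if X k > Y k then 1 else 0)))) (pmf_of_set E)) (\<lambda>(Y,R). g (Y k))
          = (\<Sum>e\<in>E. (\<lambda>(Y,R). g (Y (sig e k))) x) / real (card E)"
        unfolding x using fin ne by (simp add: integral_pmf_of_set swap_sig)
    qed
  qed
  also have "\<dots> = (\<Sum>e\<in>E. measure_pmf.expectation ?p (\<lambda>(Y,R). g (Y (sig e k)))) / real (card E)"
    by (simp add: Bochner_Integration.integral_sum[OF int])
  also have "\<dots> = (\<Sum>e\<in>E. (Top E ^^ s) (\<lambda>v. g (X v)) (sig e k)) / real (card E)"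
    using Suc.IH by simp
  also have "\<dots> = (Top E ^^ Suc s) (\<lambda>v. g (X v)) k"
    by (simp add: Top_def)
  finally show ?case .
qed

lemma gorank_R:
  assumes fin: "finite E" and ne: "E \<noteq> {}"
  shows "real s * measure_pmf.expectation (gorank E X s) (\<lambda>(Y,R). R k)
       = (\<Sum>j<s. measure_pmf.expectation (gorank E X j) (\<lambda>(Y,R). if X k > Y k then 1 else 0))"
proof (induction s)
  case 0
  then show ?case by simp
next
  case (Suc s)
  let ?p = "gorank E X s"
  let ?I = "\<lambda>(Y::nat\<Rightarrow>real,R::nat\<Rightarrow>real). if X k > Y k then 1 else (0::real)"
  have finp: "finite (set_pmf ?p)" by (rule gorank_fin[OF fin ne])
  have int: "integrable (measure_pmf ?p) h" for h :: "_ \<Rightarrow> real"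
    by (rule integrable_measure_pmf_finite[OF finp])
  have cE: "real (card E) \<noteq> 0" using fin ne by simp
  have "measure_pmf.expectation (gorank E X (Suc s)) (\<lambda>(Y,R). R k)
      = measure_pmf.expectation ?p (\<lambda>x. (1 - 1 / real (Suc s)) * (\<lambda>(Y,R). R k) x + (1 / real (Suc s)) * ?I x)"
    unfolding gorank.simps
  proof (subst exp_bind[OF finp], goal_cases)
    case (1 x)
    then show ?case using fin ne by (auto split: prod.splits)
  next
    case 2
    show ?case
    proof (rule Bochner_Integration.integral_cong[OF refl])
      fix x :: "(nat \<Rightarrow> real) \<times> (nat \<Rightarrow> real)"
      obtain Y R where x: "x = (Y,R)" by (cases x)
      show "measure_pmf.expectation (case x of (Y, R') \<Rightarrow> map_pmf (\<lambda>e. (swap_edge e Y,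
                     (\<lambda>k. (1 - 1 / real (Suc s)) * R' k
                          + (1 / real (Suc s)) * (if X k > Y k then 1 else 0)))) (pmf_of_set E)) (\<lambda>(Y,R). R k)
          = (1 - 1 / real (Suc s)) * (\<lambda>(Y,R). R k) x + (1 / real (Suc s)) * ?I x"
        unfolding x using fin ne cE by (simp add: integral_pmf_of_set)
    qed
  qed
  also have "\<dots> = (1 - 1 / real (Suc s)) * measure_pmf.expectation ?p (\<lambda>(Y,R). R k)
       + (1 / real (Suc s)) * measure_pmf.expectation ?p ?I"
    using int by simp
  finally have e: "measure_pmf.expectation (gorank E X (Suc s)) (\<lambda>(Y,R). R k) = \<dots>" .
  have "real (Suc s) * measure_pmf.expectation (gorank E X (Suc s)) (\<lambda>(Y,R). R k)
     = real s * measure_pmf.expectation ?p (\<lambda>(Y,R). R k) + measure_pmf.expectation ?p ?I"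
  proof -
    have h1: "real (Suc s) * (1 - 1 / real (Suc s)) = real s" by (simp add: field_simps)
    have h2: "real (Suc s) * (1 / real (Suc s)) = 1" by simp
    show ?thesis unfolding e distrib_left mult.assoc[symmetric] h1 h2 by simp
  qed
  also have "\<dots> = (\<Sum>j<Suc s. measure_pmf.expectation (gorank E X j) ?I)"
    using Suc.IH by simp
  finally show ?case .
qed

lemma expected_rank_formula:
  assumes fin: "finite E" and ne: "E \<noteq> {}" and t: "t \<ge> 1"
  shows "expected_rank n E X k t = real n / real t * (\<Sum>j<t. (Top E ^^ j) (\<lambda>v. if X k > X v then 1 else 0) k) + 1"
proof -
  let ?p = "gorank E X t"
  have finp: "finite (set_pmf ?p)" by (rule gorank_fin[OF fin ne])
  have int: "integrable (measure_pmf ?p) h" for h :: "_ \<Rightarrow> real"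
    by (rule integrable_measure_pmf_finite[OF finp])
  have "expected_rank n E X k t = measure_pmf.expectation ?p (\<lambda>x. real n * (\<lambda>(Y,R). R k) x + 1)"
    unfolding expected_rank_def by (rule Bochner_Integration.integral_cong) (auto split: prod.splits)
  also have "\<dots> = real n * measure_pmf.expectation ?p (\<lambda>(Y,R). R k) + 1"
    using int by simp
  also have "measure_pmf.expectation ?p (\<lambda>(Y,R). R k) = (\<Sum>j<t. measure_pmf.expectation (gorank E X j) (\<lambda>(Y,R). if X k > Y k then 1 else 0)) / real t"
    using gorank_R[OF fin ne, of t X k] t by (simp add: field_simps)
  also have "(\<Sum>j<t. measure_pmf.expectation (gorank E X j) (\<lambda>(Y,R). if X k > Y k then 1 else 0))
      = (\<Sum>j<t. (Top E ^^ j) (\<lambda>v. if X k > X v then 1 else 0) k)"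
    by (rule sum.cong[OF refl]) (rule gorank_Y[OF fin ne, where g = "\<lambda>y. if X k > y then 1 else 0"])
  finally show ?thesis by simp
qed



locale gspec =
  fixes n :: nat and E :: "nat set set" and U :: "real mat" and d :: "nat \<Rightarrow> real"
  assumes n2: "n \<ge> 2" and sg: "simple_graph n E" and conn: "connected_graph n E"
    and nb: "\<not> bipartite n E"
    and U: "U \<in> carrier_mat n n" and UtU: "transpose_mat U * U = 1\<^sub>m n"
    and Ld: "laplacian n E = U * diagm n d * transpose_mat U"
begin

definition uf :: "nat \<Rightarrow> nat \<Rightarrow> real" where "uf i v = U $$ (v - 1, i)"

lemma finE: "finite E" by (rule finite_E[OF sg])

lemma Ene: "E \<noteq> {}"
proof -
  have "(1, 2) \<in> (adj E)\<^sup>*" using conn n2 unfolding connected_graph_def by auto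
  then obtain y where "(1, y) \<in> adj E" by (cases rule: converse_rtranclE) auto
  thus ?thesis unfolding adj_def by auto
qed

lemma UUt: "U * transpose_mat U = 1\<^sub>m n"
  by (rule mat_mult_left_right_inverse[OF _ U UtU]) (use U in simp)

lemma orth_cols:
  assumes "i < n" "j < n"
  shows "(\<Sum>v\<in>{1..n}. uf i v * uf j v) = (if i = j then 1 else 0)"
proof -
  have "(\<Sum>v\<in>{1..n}. uf i v * uf j v) = (\<Sum>r<n. U $$ (r,i) * U $$ (r,j))"
    unfolding sum_1n uf_def by simp
  also have "\<dots> = (\<Sum>r<n. transpose_mat U $$ (i,r) * U $$ (r,j))"
    by (rule sum.cong) (use U assms in auto)
  also have "\<dots> = (transpose_mat U * U) $$ (i,j)"
    by (rule mult_entry[symmetric]) (use U assms in auto)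
  finally show ?thesis unfolding UtU using assms by simp
qed

lemma orth_rows:
  assumes "v \<in> {1..n}" "w \<in> {1..n}"
  shows "(\<Sum>i<n. uf i v * uf i w) = (if v = w then 1 else 0)"
proof -
  have "(\<Sum>i<n. uf i v * uf i w) = (\<Sum>i<n. U $$ (v-1,i) * transpose_mat U $$ (i,w-1))"
    unfolding uf_def by (rule sum.cong) (use U assms in auto)
  also have "\<dots> = (U * transpose_mat U) $$ (v-1,w-1)"
    by (rule mult_entry[symmetric]) (use U assms in auto)
  finally show ?thesis unfolding UUt using assms by auto
qed

lemma eig:
  assumes i: "i < n" and v: "v \<in> {1..n}"
  shows "Lop E (uf i) v = d i * uf i v"
proof -
  have L: "laplacian n E \<in> carrier_mat n n" unfolding laplacian_def by simp
  have Ut: "transpose_mat U \<in> carrier_mat n n" using U by simp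
  have LU: "laplacian n E * U = U * diagm n d"
  proof -
    have "laplacian n E * U = U * diagm n d * (transpose_mat U * U)"
      unfolding Ld using U Ut by (simp add: assoc_mult_mat[of _ n n _ n _ n] mult_carrier_mat[of _ n n _ n])
    thus ?thesis unfolding UtU using U by (simp add: right_mult_one_mat[of _ n n])
  qed
  define r where "r = v - 1"
  have r: "r < n" "v = Suc r" using v unfolding r_def by auto
  have "Lop E (uf i) v = (\<Sum>j<n. laplacian n E $$ (r,j) * uf i (Suc j))"
    unfolding r(2) by (rule L_Lop[OF sg r(1), symmetric])
  also have "\<dots> = (laplacian n E * U) $$ (r,i)"
    unfolding uf_def by (subst mult_entry[OF L U r(1) i]) simp
  also have "\<dots> = (\<Sum>k<n. U $$ (r,k) * diagm n d $$ (k,i))"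
    unfolding LU by (rule mult_entry[OF U diagm_carrier r(1) i])
  also have "\<dots> = (\<Sum>k<n. if k = i then U $$ (r,i) * d i else 0)"
    by (rule sum.cong) (use i in \<open>auto simp: diagm_def\<close>)
  also have "\<dots> = d i * uf i v" using i unfolding uf_def r(2) by simp
  finally show ?thesis .
qed

lemma Top_eig:
  assumes i: "i < n" and v: "v \<in> {1..n}"
  shows "Top E (uf i) v = (1 - d i / real (card E)) * uf i v"
  unfolding Top_Lop[OF finE Ene] eig[OF assms] by (simp add: algebra_simps)

lemma edge_form:
  assumes e: "e \<in> E"
  obtains a b where "e = {a,b}" "a \<noteq> b" "a \<in> {1..n}" "b \<in> {1..n}"
  using edge_struct[OF sg e] by blast

lemma d_quad:
  assumes i: "i < n"
  shows "d i = (\<Sum>e\<in>E. \<Sum>k\<in>e. uf i k * (uf i k - uf i (sig e k)))"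
proof -
  have "(\<Sum>v\<in>{1..n}. uf i v * (d i * uf i v)) = d i * (\<Sum>v\<in>{1..n}. uf i v * uf i v)"
    by (simp add: sum_distrib_left mult.left_commute)
  hence "d i = (\<Sum>v\<in>{1..n}. uf i v * (d i * uf i v))"
    using orth_cols[OF i i] by simp
  also have "\<dots> = (\<Sum>v\<in>{1..n}. uf i v * Lop E (uf i) v)"
    by (rule sum.cong) (use eig[OF i] in auto)
  also have "\<dots> = (\<Sum>e\<in>E. \<Sum>k\<in>e. uf i k * (uf i k - uf i (sig e k)))"
    by (rule bil[OF sg])
  finally show ?thesis .
qed

lemma edge_nonneg:
  fixes f :: "nat \<Rightarrow> real"
  assumes "e \<in> E"
  shows "(\<Sum>k\<in>e. f k * (f k - f (sig e k))) \<ge> 0"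
proof -
  obtain a b where ab: "e = {a,b}" "a \<noteq> b" using edge_form[OF assms] by metis
  show ?thesis unfolding ab(1) edge_term[OF ab(2)] by simp
qed

lemma d_nonneg: "i < n \<Longrightarrow> d i \<ge> 0"
  unfolding d_quad by (auto intro!: sum_nonneg edge_nonneg)

lemma d_zero_const:
  assumes i: "i < n" and d0: "d i = 0" and v: "v \<in> {1..n}"
  shows "uf i v = uf i 1"
proof -
  have "(\<Sum>e\<in>E. \<Sum>k\<in>e. uf i k * (uf i k - uf i (sig e k))) = 0"
    using d0 d_quad[OF i] by simp
  hence all0: "\<forall>e\<in>E. (\<Sum>k\<in>e. uf i k * (uf i k - uf i (sig e k))) = 0"
    using sum_nonneg_eq_0_iff[OF finE, of "\<lambda>e. \<Sum>k\<in>e. uf i k * (uf i k - uf i (sig e k))"] edge_nonneg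
    by blast
  have edge_eq: "uf i x = uf i y" if xy: "{x,y} \<in> E" for x y
  proof -
    obtain a b where ab: "{x,y} = {a,b}" "a \<noteq> b"
      using edge_form[OF xy] by metis
    have "(\<Sum>k\<in>{a,b}. uf i k * (uf i k - uf i (sig {a,b} k))) = 0" using xy ab all0 by metis
    hence "(uf i a - uf i b) * (uf i a - uf i b) = 0" unfolding edge_term[OF ab(2)] .
    hence "uf i a = uf i b" by simp
    thus ?thesis using ab by (auto simp: doubleton_eq_iff)
  qed
  have "(1, v) \<in> (adj E)\<^sup>*" using conn v n2 unfolding connected_graph_def by auto
  thus ?thesis
  proof (induction rule: rtrancl_induct)
    case base
    then show ?case by simp
  next
    case (step y z)
    have "{y,z} \<in> E" using step(2) unfolding adj_def by simp
    hence "uf i y = uf i z" by (rule edge_eq)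
    thus ?case using step(3) by simp
  qed
qed

lemma trace_d: "(\<Sum>i<n. d i) = 2 * real (card E)"
proof -
  have "(\<Sum>i<n. d i) = (\<Sum>i<n. \<Sum>e\<in>E. \<Sum>k\<in>e. uf i k * (uf i k - uf i (sig e k)))"
    by (rule sum.cong) (auto simp: d_quad)
  also have "\<dots> = (\<Sum>e\<in>E. \<Sum>i<n. \<Sum>k\<in>e. uf i k * (uf i k - uf i (sig e k)))"
    by (rule sum.swap)
  also have "\<dots> = (\<Sum>e\<in>E. 2)"
  proof (rule sum.cong[OF refl])
    fix e assume e: "e \<in> E"
    obtain a b where ab: "e = {a,b}" "a \<noteq> b" "a \<in> {1..n}" "b \<in> {1..n}"
      using edge_form[OF e] by metis
    have "(\<Sum>i<n. \<Sum>k\<in>e. uf i k * (uf i k - uf i (sig e k))) = (\<Sum>i<n. (uf i a - uf i b) * (uf i a - uf i b))"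
      unfolding ab(1) edge_term[OF ab(2)] ..
    also have "\<dots> = (\<Sum>i<n. uf i a * uf i a) - 2 * (\<Sum>i<n. uf i a * uf i b) + (\<Sum>i<n. uf i b * uf i b)"
      by (simp add: algebra_simps sum.distrib sum_subtractf sum_distrib_left)
    also have "\<dots> = 2" using orth_rows ab by simp
    finally show "(\<Sum>i<n. \<Sum>k\<in>e. uf i k * (uf i k - uf i (sig e k))) = 2" .
  qed
  finally show ?thesis by simp
qed

lemma exists_zero: "\<exists>i0<n. d i0 = 0"
proof -
  have "(\<Sum>i<n. (\<Sum>v\<in>{1..n}. uf i v) * (\<Sum>w\<in>{1..n}. uf i w)) = (\<Sum>i<n. \<Sum>v\<in>{1..n}. \<Sum>w\<in>{1..n}. uf i v * uf i w)"
    by (simp add: sum_product)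
  also have "\<dots> = (\<Sum>v\<in>{1..n}. \<Sum>i<n. \<Sum>w\<in>{1..n}. uf i v * uf i w)"
    by (rule sum.swap)
  also have "\<dots> = (\<Sum>v\<in>{1..n}. \<Sum>w\<in>{1..n}. \<Sum>i<n. uf i v * uf i w)"
    by (rule sum.cong[OF refl], rule sum.swap)
  also have "\<dots> = (\<Sum>v\<in>{1..n}. \<Sum>w\<in>{1..n}. if v = w then 1 else 0)"
    by (intro sum.cong refl) (simp add: orth_rows)
  also have "\<dots> = real n" by simp
  finally have "(\<Sum>i<n. (\<Sum>v\<in>{1..n}. uf i v) * (\<Sum>w\<in>{1..n}. uf i w)) \<noteq> 0" using n2 by simp
  hence "\<exists>i<n. (\<Sum>v\<in>{1..n}. uf i v) * (\<Sum>w\<in>{1..n}. uf i w) \<noteq> 0"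
    by (meson lessThan_iff sum.neutral)
  then obtain i where i: "i < n" and si: "(\<Sum>v\<in>{1..n}. uf i v) \<noteq> 0"
    by auto
  have "d i * (\<Sum>v\<in>{1..n}. uf i v) = (\<Sum>v\<in>{1..n}. 1 * Lop E (uf i) v)"
    by (simp add: sum_distrib_left eig[OF i])
  also have "\<dots> = (\<Sum>e\<in>E. \<Sum>k\<in>e. 1 * (uf i k - uf i (sig e k)))"
    by (rule bil[OF sg])
  also have "\<dots> = 0"
  proof (rule sum.neutral, rule ballI)
    fix e assume e: "e \<in> E"
    obtain a b where ab: "e = {a,b}" "a \<noteq> b"
      using edge_form[OF e] by metis
    show "(\<Sum>k\<in>e. 1 * (uf i k - uf i (sig e k))) = 0"
      using edge_term[OF ab(2), of "\<lambda>_. 1" "uf i"] unfolding ab(1) by simp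
  qed
  finally show ?thesis using i si by auto
qed

lemma zero_unique:
  assumes i: "i < n" and j: "j < n" and di: "d i = 0" and dj: "d j = 0"
  shows "i = j"
proof (rule ccontr)
  assume ij: "i \<noteq> j"
  have ci: "uf i v = uf i 1" if "v \<in> {1..n}" for v using d_zero_const[OF i di that] .
  have cj: "uf j v = uf j 1" if "v \<in> {1..n}" for v using d_zero_const[OF j dj that] .
  have "(\<Sum>v\<in>{1..n}. uf i v * uf i v) = real n * (uf i 1 * uf i 1)"
  proof -
    have "(\<Sum>v\<in>{1..n}. uf i 1 * uf i 1) = real n * (uf i 1 * uf i 1)" by simp
    moreover have "\<forall>v\<in>{1..n}. uf i v * uf i v = uf i 1 * uf i 1" using ci cj by metis
    ultimately show ?thesis by (metis (no_types, lifting) sum.cong)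
  qed
  hence 1: "real n * (uf i 1 * uf i 1) = 1" using orth_cols[OF i i] by simp
  have "(\<Sum>v\<in>{1..n}. uf j v * uf j v) = real n * (uf j 1 * uf j 1)"
  proof -
    have "(\<Sum>v\<in>{1..n}. uf j 1 * uf j 1) = real n * (uf j 1 * uf j 1)" by simp
    moreover have "\<forall>v\<in>{1..n}. uf j v * uf j v = uf j 1 * uf j 1" using ci cj by metis
    ultimately show ?thesis by (metis (no_types, lifting) sum.cong)
  qed
  hence 2: "real n * (uf j 1 * uf j 1) = 1" using orth_cols[OF j j] by simp
  have "(\<Sum>v\<in>{1..n}. uf i v * uf j v) = real n * (uf i 1 * uf j 1)"
  proof -
    have "(\<Sum>v\<in>{1..n}. uf i 1 * uf j 1) = real n * (uf i 1 * uf j 1)" by simp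
    moreover have "\<forall>v\<in>{1..n}. uf i v * uf j v = uf i 1 * uf j 1" using ci cj by metis
    ultimately show ?thesis by (metis (no_types, lifting) sum.cong)
  qed
  hence 3: "real n * (uf i 1 * uf j 1) = 0" using orth_cols[OF i j] ij by simp
  show False using 1 2 3 n2 by auto
qed

end

lemma order_prod_lin:
  fixes as :: "real list"
  shows "(\<Prod>a\<leftarrow>as. [:-a,1:]) \<noteq> 0 \<and> Polynomial.order x (\<Prod>a\<leftarrow>as. [:-a,1:]) = length (filter (\<lambda>a. a = x) as)
    \<and> (poly (\<Prod>a\<leftarrow>as. [:-a,1:]) x = 0 \<longleftrightarrow> x \<in> set as)"
proof (induction as)
  case Nil
  then show ?case by simp
next
  case (Cons a as)
  let ?P = "(\<Prod>a\<leftarrow>as. [:-a,1:])"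
  have p1: "[:-a,1:] \<noteq> (0::real poly)" by simp
  have p2: "?P \<noteq> 0" using Cons.IH by blast
  have nz: "[:-a,1:] * ?P \<noteq> 0" using p1 p2 by (rule no_zero_divisors)
  have eq: "(\<Prod>x\<leftarrow>(a#as). [:-x,1:]) = [:-a,1:] * ?P" by simp
  have po: "poly ([:-a,1:] * ?P) x = (x - a) * poly ?P x" by (simp only: poly_mult) simp
  have o1: "Polynomial.order x [:-a,1:] = (if a = x then 1 else 0)"
  proof (cases "a = x")
    case True
    then show ?thesis using order_power_n_n[of x 1] by simp
  next
    case False
    then show ?thesis by (simp add: order_0I)
  qed
  have om: "Polynomial.order x ([:-a,1:] * ?P) = Polynomial.order x [:-a,1:] + Polynomial.order x ?P"
    by (rule order_mult[OF nz])
  show ?case unfolding eq po om o1 using nz Cons.IH by auto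
qed

context gspec
begin

lemma char_poly_L: "char_poly (laplacian n E) = (\<Prod>a\<leftarrow>map d [0..<n]. [:-a,1:])"
proof -
  have L: "laplacian n E \<in> carrier_mat n n" unfolding laplacian_def by simp
  have dr: "dim_row (laplacian n E) = n" using L by simp
  have Ut: "transpose_mat U \<in> carrier_mat n n" using U by simp
  have "similar_mat_wit (laplacian n E) (diagm n d) U (transpose_mat U)"
    unfolding similar_mat_wit_def Let_def dr
    using L U Ut UtU UUt Ld diagm_carrier[of n d] by (intro conjI; blast)
  hence "similar_mat (laplacian n E) (diagm n d)" unfolding similar_mat_def by blast
  hence "char_poly (laplacian n E) = char_poly (diagm n d)" by (rule char_poly_similar)
  also have "\<dots> = (\<Prod>a\<leftarrow>diag_mat (diagm n d). [:-a,1:])"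
    by (rule char_poly_upper_triangular[OF diagm_carrier]) (auto simp: upper_triangular_def diagm_def)
  also have "diag_mat (diagm n d) = map d [0..<n]"
    unfolding diag_mat_def diagm_def by simp
  finally show ?thesis .
qed

lemma eigenvalue_L: "eigenvalue (laplacian n E) x \<longleftrightarrow> (\<exists>i<n. d i = x)"
proof -
  have L: "laplacian n E \<in> carrier_mat n n" unfolding laplacian_def by simp
  show ?thesis unfolding eigenvalue_root_char_poly[OF L] char_poly_L
    using order_prod_lin[of "map d [0..<n]" x] by auto
qed

lemma order_L: "Polynomial.order x (char_poly (laplacian n E)) = card {i. i < n \<and> d i = x}"
proof -
  have "Polynomial.order x (char_poly (laplacian n E)) = length (filter (\<lambda>a. a = x) (map d [0..<n]))"
    unfolding char_poly_L using order_prod_lin[of "map d [0..<n]" x] by simp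
  also have "\<dots> = length (filter (\<lambda>i. d i = x) [0..<n])" by (simp add: filter_map comp_def)
  also have "\<dots> = card {i. i < n \<and> d i = x}" unfolding length_filter_conv_card
    by (rule arg_cong[where f = card]) auto
  finally show ?thesis .
qed

lemma count_le: "(\<Sum>nu\<in>{nu. eigenvalue (laplacian n E) nu \<and> nu \<le> mu}. Polynomial.order nu (char_poly (laplacian n E)))
   = card {i. i < n \<and> d i \<le> mu}"
proof -
  let ?A = "{i. i < n \<and> d i \<le> mu}"
  have set: "{nu. eigenvalue (laplacian n E) nu \<and> nu \<le> mu} = d ` ?A"
    unfolding eigenvalue_L by auto
  have "(\<Sum>nu\<in>d ` ?A. Polynomial.order nu (char_poly (laplacian n E))) = (\<Sum>nu\<in>d ` ?A. \<Sum>i\<in>{i. i \<in> ?A \<and> d i = nu}. 1)"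
  proof (rule sum.cong[OF refl])
    fix nu assume "nu \<in> d ` ?A"
    hence "{i. i < n \<and> d i = nu} = {i. i \<in> ?A \<and> d i = nu}" by auto
    thus "Polynomial.order nu (char_poly (laplacian n E)) = (\<Sum>i\<in>{i. i \<in> ?A \<and> d i = nu}. 1)"
      unfolding order_L by simp
  qed
  also have "\<dots> = (\<Sum>i\<in>?A. 1)" by (rule sum.group) auto
  finally show ?thesis unfolding set by simp
qed

definition i0 :: nat where "i0 = (SOME i. i < n \<and> d i = 0)"

lemma i0: "i0 < n" "d i0 = 0"
  using someI_ex[OF exists_zero] unfolding i0_def by auto

lemma d_pos:
  assumes "i < n" "i \<noteq> i0" shows "d i > 0"
proof -
  have "d i \<noteq> 0" using zero_unique[OF assms(1) i0(1) _ i0(2)] assms(2) by blast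
  thus ?thesis using d_nonneg[OF assms(1)] by simp
qed

definition lam2 :: real where "lam2 = Min (d ` ({..<n} - {i0}))"

lemma lam2_props: "lam2 > 0" "\<And>i. i < n \<Longrightarrow> i \<noteq> i0 \<Longrightarrow> lam2 \<le> d i" "\<exists>i1<n. i1 \<noteq> i0 \<and> d i1 = lam2"
proof -
  have "(if i0 = 0 then 1 else 0) \<in> {..<n} - {i0}" using n2 by auto
  hence ne: "{..<n} - {i0} \<noteq> {}" by blast
  have fin: "finite (d ` ({..<n} - {i0}))" by simp
  have "lam2 \<in> d ` ({..<n} - {i0})" unfolding lam2_def using ne fin by (intro Min_in) auto
  thus "\<exists>i1<n. i1 \<noteq> i0 \<and> d i1 = lam2" by auto
  thus "lam2 > 0" using d_pos by metis
  show "\<And>i. i < n \<Longrightarrow> i \<noteq> i0 \<Longrightarrow> lam2 \<le> d i" unfolding lam2_def using fin by auto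
qed

lemma sse: "second_smallest_eigenvalue (laplacian n E) = lam2"
proof -
  let ?S = "{mu. eigenvalue (laplacian n E) mu \<and>
              (\<Sum>nu\<in>{nu. eigenvalue (laplacian n E) nu \<and> nu \<le> mu}. Polynomial.order nu (char_poly (laplacian n E))) \<ge> 2}"
  have S: "?S = {mu. (\<exists>i<n. d i = mu) \<and> card {i. i < n \<and> d i \<le> mu} \<ge> 2}"
    by (simp only: count_le) (simp add: eigenvalue_L)
  obtain i1 where i1: "i1 < n" "i1 \<noteq> i0" "d i1 = lam2" using lam2_props(3) by auto
  show ?thesis unfolding second_smallest_eigenvalue_def S
  proof (rule Min_eqI)
    show "finite {mu. (\<exists>i<n. d i = mu) \<and> card {i. i < n \<and> d i \<le> mu} \<ge> 2}"
      by (rule finite_subset[of _ "d ` {..<n}"]) auto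
  next
    fix mu assume "mu \<in> {mu. (\<exists>i<n. d i = mu) \<and> card {i. i < n \<and> d i \<le> mu} \<ge> 2}"
    hence c: "card {i. i < n \<and> d i \<le> mu} \<ge> 2" by auto
    have "\<exists>i. i < n \<and> d i \<le> mu \<and> i \<noteq> i0"
    proof (rule ccontr)
      assume "\<not> ?thesis"
      hence "{i. i < n \<and> d i \<le> mu} \<subseteq> {i0}" by auto
      hence "card {i. i < n \<and> d i \<le> mu} \<le> 1" using card_mono[of "{i0}"] by fastforce
      thus False using c by simp
    qed
    then obtain i where "i < n" "d i \<le> mu" "i \<noteq> i0" by auto
    thus "lam2 \<le> mu" using lam2_props(2)[of i] by simp
  next
    have "{i0, i1} \<subseteq> {i. i < n \<and> d i \<le> lam2}" using i0 i1 lam2_props(1) by auto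
    hence "card {i0, i1} \<le> card {i. i < n \<and> d i \<le> lam2}" by (intro card_mono) auto
    hence "card {i. i < n \<and> d i \<le> lam2} \<ge> 2" using i1 by simp
    thus "lam2 \<in> {mu. (\<exists>i<n. d i = mu) \<and> card {i. i < n \<and> d i \<le> mu} \<ge> 2}" using i1 by auto
  qed
qed

lemma n3: "n \<ge> 3"
proof (rule ccontr)
  assume "\<not> n \<ge> 3"
  hence n: "n = 2" using n2 by simp
  have "bipartite n E"
    unfolding bipartite_def
  proof (intro exI[of _ "{1}"] conjI ballI)
    show "{1} \<subseteq> {1..n}" using n by simp
    fix e assume e: "e \<in> E"
    obtain a b where ab: "e = {a,b}" "a \<noteq> b" "a \<in> {1..n}" "b \<in> {1..n}" using edge_form[OF e] by metis
    hence "e = {1,2}" using n by auto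
    thus "card (e \<inter> {1}) = 1" by simp
  qed
  thus False using nb by simp
qed

lemma lam2_le: "lam2 \<le> real (card E)"
proof -
  define a where "a = (if i0 = 0 then 1 else (0::nat))"
  define b where "b = (if i0 = 2 then 1 else (2::nat))"
  have a: "a < n" "a \<noteq> i0" unfolding a_def using n3 by auto
  have b: "b < n" "b \<noteq> i0" "b \<noteq> a" unfolding b_def a_def using n3 by auto
  have "d a + d b \<le> (\<Sum>i<n. d i)"
  proof -
    have "(\<Sum>i\<in>{a,b}. d i) \<le> (\<Sum>i<n. d i)"
      by (rule sum_mono2) (use a b d_nonneg in auto)
    thus ?thesis using b by simp
  qed
  moreover have "lam2 \<le> d a" "lam2 \<le> d b" using lam2_props(2) a b by auto
  ultimately show ?thesis using trace_d by simp
qed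

lemma d_le: "i < n \<Longrightarrow> d i \<le> 2 * real (card E)"
proof -
  assume i: "i < n"
  have "d i \<le> (\<Sum>i<n. d i)" by (rule member_le_sum) (use i d_nonneg in auto)
  thus ?thesis using trace_d by simp
qed

end



lemma geo_bound:
  fixes x al :: real
  assumes al: "0 < al" "al \<le> 1" and x: "al \<le> x" "x \<le> 2"
  shows "\<bar>\<Sum>j<t. (1 - x) ^ j\<bar> \<le> 1 / al"
proof (cases "t = 0")
  case True
  then show ?thesis using al by simp
next
  case False
  define r where "r = 1 - x"
  have xpos: "x > 0" using al x by simp
  have r1: "r \<noteq> 1" using xpos unfolding r_def by simp
  have gs: "(\<Sum>j<t. r ^ j) = (1 - r ^ t) / x"
  proof -
    have "(\<Sum>j<t. r ^ j) = (r ^ t - 1) / (r - 1)" by (rule geometric_sum[OF r1])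
    also have "r - 1 = - x" unfolding r_def by simp
    finally have "(\<Sum>j<t. r ^ j) = (r ^ t - 1) / (- x)" .
    also have "\<dots> = (1 - r ^ t) / x" by (simp add: divide_simps)
    finally show ?thesis .
  qed
  have ix: "1 / x \<le> 1 / al" using al x xpos by (simp add: field_simps)
  show ?thesis
  proof (cases "r \<ge> 0")
    case True
    have h1: "r ^ t \<le> 1" using True xpos unfolding r_def by (intro power_le_one) auto
    have h2: "0 \<le> r ^ t" using True by simp
    have h3: "0 \<le> (1 - r ^ t) / x" using h1 xpos by simp
    have h4: "(1 - r ^ t) / x \<le> 1 / x" using h2 xpos by (intro divide_right_mono) auto
    show ?thesis unfolding r_def[symmetric] gs using h3 h4 ix by simp
  next
    case False
    have ar: "\<bar>r\<bar> \<le> 1" using x False unfolding r_def by simp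
    have tt: "t = Suc (t - 1)" using \<open>t \<noteq> 0\<close> by simp
    have "\<bar>r\<bar> ^ t = \<bar>r\<bar> * \<bar>r\<bar> ^ (t - 1)" by (subst tt) simp
    also have "\<dots> \<le> \<bar>r\<bar>" by (rule mult_left_le) (use ar in \<open>auto intro: power_le_one\<close>)
    finally have "\<bar>r ^ t\<bar> \<le> \<bar>r\<bar>" by (simp add: power_abs)
    moreover have "\<bar>r\<bar> = x - 1" using False unfolding r_def by simp
    ultimately have "\<bar>1 - r ^ t\<bar> \<le> x" by linarith
    hence "\<bar>1 - r ^ t\<bar> / x \<le> 1" using xpos by simp
    hence "\<bar>(1 - r ^ t) / x\<bar> \<le> 1" using xpos by simp
    also have "1 \<le> 1 / al" using al by simp
    finally show ?thesis unfolding r_def[symmetric] gs .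
  qed
qed

context gspec
begin

definition cf :: "(nat \<Rightarrow> real) \<Rightarrow> nat \<Rightarrow> real" where
  "cf a i = (\<Sum>w\<in>{1..n}. uf i w * a w)"

definition rho :: "nat \<Rightarrow> real" where "rho i = 1 - d i / real (card E)"

lemma expansion:
  assumes v: "v \<in> {1..n}"
  shows "a v = (\<Sum>i<n. cf a i * uf i v)"
proof -
  have "cf a i * uf i v = (\<Sum>w\<in>{1..n}. a w * (uf i w * uf i v))" for i
    unfolding cf_def sum_distrib_right by (rule sum.cong) (auto simp: mult_ac)
  hence "(\<Sum>i<n. cf a i * uf i v) = (\<Sum>i<n. \<Sum>w\<in>{1..n}. a w * (uf i w * uf i v))"
    by simp
  also have "\<dots> = (\<Sum>w\<in>{1..n}. \<Sum>i<n. a w * (uf i w * uf i v))" by (rule sum.swap)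
  also have "\<dots> = (\<Sum>w\<in>{1..n}. a w * (if w = v then 1 else 0))"
  proof (rule sum.cong[OF refl])
    fix w assume w: "w \<in> {1..n}"
    have "(\<Sum>i<n. a w * (uf i w * uf i v)) = a w * (\<Sum>i<n. uf i w * uf i v)" by (rule sum_distrib_left[symmetric])
    thus "(\<Sum>i<n. a w * (uf i w * uf i v)) = a w * (if w = v then 1 else 0)" using orth_rows[OF w v] by simp
  qed
  also have "\<dots> = a v" using v by (simp add: if_distrib cong: if_cong)
  finally show ?thesis by simp
qed

lemma Top_local:
  assumes "\<forall>w\<in>{1..n}. f w = g w" "v \<in> {1..n}"
  shows "Top E f v = Top E g v"
  unfolding Top_def using assms sig_in[OF sg _ assms(2)] by (auto intro!: sum.cong)

lemma Top_lin:
  "Top E (\<lambda>w. \<Sum>i<n. al i * u i w) v = (\<Sum>i<n. al i * Top E (u i) v)"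
proof -
  have h: "(\<Sum>e\<in>E. \<Sum>i<n. al i * u i (sig e v)) = (\<Sum>i<n. al i * (\<Sum>e\<in>E. u i (sig e v)))"
    by (subst sum.swap) (simp add: sum_distrib_left)
  have "(\<Sum>i<n. al i * Top E (u i) v) = (\<Sum>i<n. al i * (\<Sum>e\<in>E. u i (sig e v)) / real (card E))"
    by (simp add: Top_def)
  also have "\<dots> = (\<Sum>i<n. al i * (\<Sum>e\<in>E. u i (sig e v))) / real (card E)"
    by (rule sum_divide_distrib[symmetric])
  also have "\<dots> = Top E (\<lambda>w. \<Sum>i<n. al i * u i w) v"
    unfolding Top_def h ..
  finally show ?thesis by simp
qed

lemma iter:
  assumes v: "v \<in> {1..n}"
  shows "(Top E ^^ j) a v = (\<Sum>i<n. cf a i * rho i ^ j * uf i v)"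
  using v
proof (induction j arbitrary: v)
  case 0
  then show ?case using expansion[OF 0] by simp
next
  case (Suc j)
  have "(Top E ^^ Suc j) a v = Top E ((Top E ^^ j) a) v" by simp
  also have "\<dots> = Top E (\<lambda>w. \<Sum>i<n. (cf a i * rho i ^ j) * uf i w) v"
    by (rule Top_local) (use Suc in auto)
  also have "\<dots> = (\<Sum>i<n. (cf a i * rho i ^ j) * Top E (uf i) v)" by (rule Top_lin)
  also have "\<dots> = (\<Sum>i<n. cf a i * rho i ^ Suc j * uf i v)"
  proof (rule sum.cong[OF refl])
    fix i assume "i \<in> {..<n}"
    hence "Top E (uf i) v = rho i * uf i v" using Top_eig[OF _ Suc.prems] rho_def by simp
    thus "cf a i * rho i ^ j * Top E (uf i) v = cf a i * rho i ^ Suc j * uf i v" by (simp add: mult_ac)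
  qed
  finally show ?case .
qed

lemma sum_iter:
  assumes v: "v \<in> {1..n}"
  shows "(\<Sum>j<t. (Top E ^^ j) a v) = (\<Sum>i<n. cf a i * (\<Sum>j<t. rho i ^ j) * uf i v)"
proof -
  have "(\<Sum>j<t. (Top E ^^ j) a v) = (\<Sum>j<t. \<Sum>i<n. cf a i * rho i ^ j * uf i v)"
    using iter[OF v] by simp
  also have "\<dots> = (\<Sum>i<n. \<Sum>j<t. cf a i * rho i ^ j * uf i v)" by (rule sum.swap)
  also have "\<dots> = (\<Sum>i<n. cf a i * (\<Sum>j<t. rho i ^ j) * uf i v)"
    by (rule sum.cong[OF refl]) (simp add: sum_distrib_left sum_distrib_right mult.assoc)
  finally show ?thesis .
qed

lemma parseval: "(\<Sum>i<n. cf a i ^ 2) = (\<Sum>w\<in>{1..n}. a w ^ 2)"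
proof -
  have sq: "cf a i ^ 2 = (\<Sum>v\<in>{1..n}. \<Sum>w\<in>{1..n}. (a v * a w) * (uf i v * uf i w))" for i
  proof -
    have "cf a i ^ 2 = (\<Sum>v\<in>{1..n}. uf i v * a v) * (\<Sum>w\<in>{1..n}. uf i w * a w)"
      unfolding cf_def power2_eq_square ..
    also have "\<dots> = (\<Sum>v\<in>{1..n}. \<Sum>w\<in>{1..n}. (uf i v * a v) * (uf i w * a w))"
      by (rule sum_product)
    also have "\<dots> = (\<Sum>v\<in>{1..n}. \<Sum>w\<in>{1..n}. (a v * a w) * (uf i v * uf i w))"
      by (intro sum.cong refl) (simp only: mult_ac)
    finally show ?thesis .
  qed
  have "(\<Sum>i<n. cf a i ^ 2) = (\<Sum>i<n. \<Sum>v\<in>{1..n}. \<Sum>w\<in>{1..n}. (a v * a w) * (uf i v * uf i w))"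
    by (simp only: sq)
  also have "\<dots> = (\<Sum>v\<in>{1..n}. \<Sum>i<n. \<Sum>w\<in>{1..n}. (a v * a w) * (uf i v * uf i w))" by (rule sum.swap)
  also have "\<dots> = (\<Sum>v\<in>{1..n}. \<Sum>w\<in>{1..n}. \<Sum>i<n. (a v * a w) * (uf i v * uf i w))"
    by (rule sum.cong[OF refl], rule sum.swap)
  also have "\<dots> = (\<Sum>v\<in>{1..n}. \<Sum>w\<in>{1..n}. (a v * a w) * (if v = w then 1 else 0))"
  proof (intro sum.cong refl)
    fix v w assume v: "v \<in> {1..n}" and w: "w \<in> {1..n}"
    have "(\<Sum>i<n. (a v * a w) * (uf i v * uf i w)) = (a v * a w) * (\<Sum>i<n. uf i v * uf i w)"
      by (rule sum_distrib_left[symmetric])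
    thus "(\<Sum>i<n. (a v * a w) * (uf i v * uf i w)) = (a v * a w) * (if v = w then 1 else 0)"
      using orth_rows[OF v w] by simp
  qed
  also have "\<dots> = (\<Sum>v\<in>{1..n}. a v ^ 2)"
  proof (rule sum.cong[OF refl])
    fix v assume v: "v \<in> {1..n}"
    have "(\<Sum>w\<in>{1..n}. (a v * a w) * (if v = w then 1 else 0)) = (\<Sum>w\<in>{1..n}. if w = v then a v * a v else 0)"
      by (rule sum.cong) auto
    also have "\<dots> = a v ^ 2" using v by (simp add: power2_eq_square)
    finally show "(\<Sum>w\<in>{1..n}. (a v * a w) * (if v = w then 1 else 0)) = a v ^ 2" .
  qed
  finally show ?thesis .
qed

lemma final_bound:
  fixes X :: "nat \<Rightarrow> real" and k t :: nat
  assumes k: "k \<in> {1..n}" and t: "t \<ge> 1"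
  shows "\<bar>real n / real t * (\<Sum>j<t. (Top E ^^ j) (\<lambda>v. if X k > X v then 1 else 0) k) + 1
            - (1 + real (card {l\<in>{1..n}. X k > X l}))\<bar>
         \<le> real n powr (3/2) * phi (real (card {l\<in>{1..n}. X k > X l}) / real n) / ((lam2 / real (card E)) * real t)"
proof -
  define a where "a = (\<lambda>v. if X k > X v then 1 else (0::real))"
  define m where "m = real (card {l\<in>{1..n}. X k > X l})"
  define I' where "I' = {..<n} - {i0}"
  define B where "B = real (card E) / lam2"
  define G where "G = (\<lambda>i. \<Sum>j<t. rho i ^ j)"
  define R where "R = (\<Sum>i\<in>I'. cf a i * G i * uf i k)"
  define kap where "kap = uf i0 1"
  have cE: "real (card E) > 0" using finE Ene by (simp add: card_gt_0_iff)
  have l2: "lam2 > 0" by (rule lam2_props(1))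
  have Bpos: "B > 0" unfolding B_def using cE l2 by simp
  have npos: "real n > 0" using n2 by simp
  have Gb: "\<bar>G i\<bar> \<le> B" if i: "i \<in> I'" for i
  proof -
    have i': "i < n" "i \<noteq> i0" using i unfolding I'_def by auto
    have "\<bar>\<Sum>j<t. (1 - d i / real (card E)) ^ j\<bar> \<le> 1 / (lam2 / real (card E))"
    proof (rule geo_bound)
      show "0 < lam2 / real (card E)" using l2 cE by simp
      show "lam2 / real (card E) \<le> 1" using lam2_le cE by simp
      show "lam2 / real (card E) \<le> d i / real (card E)" using lam2_props(2)[OF i'] cE by (simp add: divide_right_mono)
      show "d i / real (card E) \<le> 2" using d_le[OF i'(1)] cE by (simp add: field_simps)
    qed
    thus ?thesis unfolding G_def rho_def B_def by simp
  qed
  have G0: "G i0 = real t" unfolding G_def rho_def using i0 by simp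
  have const: "uf i0 v = kap" if "v \<in> {1..n}" for v unfolding kap_def using d_zero_const[OF i0 that] .
  have sumconst: "(\<Sum>v\<in>{1..n}. h v * uf i0 v) = kap * (\<Sum>v\<in>{1..n}. h v)" for h
  proof -
    have "(\<Sum>v\<in>{1..n}. h v * uf i0 v) = (\<Sum>v\<in>{1..n}. h v * kap)"
      by (rule sum.cong[OF refl]) (simp add: const)
    also have "\<dots> = kap * (\<Sum>v\<in>{1..n}. h v)" by (simp add: sum_distrib_left mult.commute)
    finally show ?thesis .
  qed
  have kap2: "real n * (kap * kap) = 1"
  proof -
    have "(\<Sum>v\<in>{1..n}. uf i0 v * uf i0 v) = 1" using orth_cols[OF i0(1) i0(1)] by simp
    moreover have "(\<Sum>v\<in>{1..n}. uf i0 v * uf i0 v) = kap * (\<Sum>v\<in>{1..n}. uf i0 v)" by (rule sumconst)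
    moreover have "(\<Sum>v\<in>{1..n}. uf i0 v) = (\<Sum>v\<in>{1..n}. kap)" by (rule sum.cong[OF refl]) (simp add: const)
    ultimately show ?thesis by (simp add: mult_ac)
  qed
  have sa: "(\<Sum>w\<in>{1..n}. a w) = m"
  proof -
    have "(\<Sum>w\<in>{1..n}. a w) = (\<Sum>w\<in>{l\<in>{1..n}. X k > X l}. 1)"
      unfolding a_def by (rule sum.inter_filter[symmetric]) simp
    thus ?thesis unfolding m_def by simp
  qed
  have sa2: "(\<Sum>w\<in>{1..n}. a w ^ 2) = m"
  proof -
    have "(\<Sum>w\<in>{1..n}. a w ^ 2) = (\<Sum>w\<in>{1..n}. a w)" by (rule sum.cong) (auto simp: a_def)
    thus ?thesis using sa by simp
  qed
  have mle: "m \<le> real n"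
  proof -
    have "card {l\<in>{1..n}. X k > X l} \<le> card {1..n}" by (rule card_mono) auto
    thus ?thesis unfolding m_def by simp
  qed
  have mge: "m \<ge> 0" unfolding m_def by simp
  have c0: "cf a i0 = kap * m"
    unfolding cf_def using sumconst[of a] sa by (simp add: mult.commute)
  have S: "(\<Sum>j<t. (Top E ^^ j) a k) = (\<Sum>i<n. cf a i * G i * uf i k)"
    unfolding G_def by (rule sum_iter[OF k])
  also have "\<dots> = cf a i0 * G i0 * uf i0 k + R"
    unfolding R_def I'_def by (rule sum.remove) (use i0 in auto)
  also have "cf a i0 * G i0 * uf i0 k = m * real t / real n"
    unfolding c0 G0 const[OF k] using kap2 npos by (simp add: field_simps)
  finally have S2: "(\<Sum>j<t. (Top E ^^ j) a k) = m * real t / real n + R" .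
  have tpos: "real t > 0" using t by simp
  have lhs: "real n / real t * (\<Sum>j<t. (Top E ^^ j) a k) + 1 - (1 + m) = real n / real t * R"
    unfolding S2 using tpos npos by (simp add: field_simps)
  have CS: "R^2 \<le> (\<Sum>i\<in>I'. (cf a i * G i)^2) * (\<Sum>i\<in>I'. (uf i k)^2)"
    unfolding R_def by (rule Cauchy_Schwarz_ineq_sum)
  have s1: "(\<Sum>i\<in>I'. (uf i k)^2) \<le> 1"
  proof -
    have "(\<Sum>i\<in>I'. (uf i k)^2) \<le> (\<Sum>i<n. (uf i k)^2)"
      by (rule sum_mono2) (auto simp: I'_def)
    also have "\<dots> = 1" using orth_rows[OF k k] by (simp add: power2_eq_square)
    finally show ?thesis .
  qed
  have s2: "(\<Sum>i\<in>I'. (cf a i * G i)^2) \<le> B^2 * (\<Sum>i\<in>I'. (cf a i)^2)"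
  proof -
    have "(\<Sum>i\<in>I'. (cf a i * G i)^2) \<le> (\<Sum>i\<in>I'. B^2 * (cf a i)^2)"
    proof (rule sum_mono)
      fix i assume i: "i \<in> I'"
      have "(G i)^2 \<le> B^2" using Gb[OF i] Bpos by (metis abs_le_square_iff abs_of_pos)
      hence "(G i)^2 * (cf a i)^2 \<le> B^2 * (cf a i)^2" by (rule mult_right_mono) simp
      thus "(cf a i * G i)^2 \<le> B^2 * (cf a i)^2"
        by (simp add: power_mult_distrib mult.commute)
    qed
    thus ?thesis by (simp add: sum_distrib_left)
  qed
  have s3: "(\<Sum>i\<in>I'. (cf a i)^2) = m - m^2 / real n"
  proof -
    have "(\<Sum>i<n. (cf a i)^2) = (cf a i0)^2 + (\<Sum>i\<in>I'. (cf a i)^2)"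
      unfolding I'_def by (rule sum.remove) (use i0 in auto)
    hence "(\<Sum>i\<in>I'. (cf a i)^2) = m - (kap * m)^2" using parseval[of a] sa2 c0 by simp
    also have "(kap * m)^2 = m^2 / real n" using kap2 npos by (simp add: field_simps power2_eq_square)
    finally show ?thesis .
  qed
  have qnn: "m - m^2 / real n \<ge> 0"
  proof -
    have "m * m \<le> m * real n" using mle mge by (rule mult_left_mono)
    hence "m^2 / real n \<le> m" using npos by (simp add: field_simps power2_eq_square)
    thus ?thesis by simp
  qed
  have R2: "R^2 \<le> (B * sqrt (m - m^2 / real n))^2"
  proof -
    have "R^2 \<le> B^2 * (m - m^2 / real n) * 1"
    proof -
      have "R^2 \<le> (\<Sum>i\<in>I'. (cf a i * G i)^2) * (\<Sum>i\<in>I'. (uf i k)^2)" by (rule CS)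
      also have "\<dots> \<le> B^2 * (m - m^2 / real n) * 1"
        by (rule mult_mono) (use s1 s2 s3 qnn in \<open>auto intro: sum_nonneg\<close>)
      finally show ?thesis .
    qed
    thus ?thesis using qnn by (simp add: power_mult_distrib)
  qed
  have Rb: "\<bar>R\<bar> \<le> B * sqrt (m - m^2 / real n)"
  proof -
    have "\<bar>R\<bar> \<le> \<bar>B * sqrt (m - m^2 / real n)\<bar>" using R2 by (simp only: abs_le_square_iff)
    thus ?thesis using Bpos qnn by simp
  qed
  have phi_eq: "sqrt (real n) * phi (m / real n) = sqrt (m - m^2 / real n)"
  proof -
    have "sqrt (real n) * phi (m / real n) = sqrt (real n * (m / real n * (1 - m / real n)))"
      unfolding phi_def by (simp only: real_sqrt_mult)
    also have "real n * (m / real n * (1 - m / real n)) = m - m^2 / real n"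
      using npos by (simp add: field_simps power2_eq_square)
    finally show ?thesis .
  qed
  have pw: "real n powr (3/2) = real n * sqrt (real n)"
  proof -
    have "real n powr (3/2) = real n powr (1 + 1/2)" by simp
    also have "\<dots> = real n powr 1 * real n powr (1/2)" by (rule powr_add)
    also have "\<dots> = real n * sqrt (real n)" using npos by (simp add: powr_half_sqrt)
    finally show ?thesis .
  qed
  have rhs: "real n powr (3/2) * phi (m / real n) / ((lam2 / real (card E)) * real t)
       = real n / real t * (B * sqrt (m - m^2 / real n))"
    unfolding pw B_def phi_eq[symmetric] using l2 cE tpos by (simp add: field_simps)
  have "\<bar>real n / real t * R\<bar> = real n / real t * \<bar>R\<bar>" using npos tpos by (simp add: abs_mult)
  also have "\<dots> \<le> real n / real t * (B * sqrt (m - m^2 / real n))"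
    by (rule mult_left_mono[OF Rb]) (use npos tpos in simp)
  finally show ?thesis unfolding lhs[unfolded a_def m_def] rhs[unfolded m_def] unfolding m_def a_def .
qed

end


lemma laplacian_sym: "transpose_mat (laplacian n E) = laplacian n E"
  by (rule eq_matI) (auto simp: laplacian_def insert_commute)

theorem theorem1:
  fixes n :: nat and E :: "nat set set" and X :: "nat \<Rightarrow> real"
  assumes "n \<ge> 2"
    and "simple_graph n E"
    and "connected_graph n E"
    and "\<not> bipartite n E"
    and "inj_on X {1..n}"
  defines "c \<equiv> second_smallest_eigenvalue (laplacian n E) / real (card E)"
  shows "\<forall>k\<in>{1..n}.
           (\<forall>t\<ge>1. \<bar>expected_rank n E X k t - real (rank_of n X k)\<bar>
                    \<le> real n powr (3/2) * phi ((real (rank_of n X k) - 1) / real n) / (c * real t))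
         \<and> (\<lambda>t. expected_rank n E X k t) \<longlonglongrightarrow> real (rank_of n X k)"
proof -
  have L: "laplacian n E \<in> carrier_mat n n" unfolding laplacian_def by simp
  obtain U d where U: "U \<in> carrier_mat n n" and UtU: "transpose_mat U * U = 1\<^sub>m n"
    and Ld: "laplacian n E = U * diagm n d * transpose_mat U"
    using spectral_real[OF L laplacian_sym] by blast
  interpret gspec n E U d
    by unfold_locales (use assms(1-4) U UtU Ld in auto)
  have c: "c = lam2 / real (card E)" unfolding c_def sse ..
  show ?thesis
  proof (intro ballI conjI allI impI)
    fix k assume k: "k \<in> {1..n}"
    let ?r = "real (rank_of n X k)"
    have rk: "?r = 1 + real (card {l\<in>{1..n}. X k > X l})" unfolding rank_of_def by simp
    have bnd: "\<bar>expected_rank n E X k t - ?r\<bar>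
        \<le> real n powr (3/2) * phi ((?r - 1) / real n) / (c * real t)" if t: "t \<ge> 1" for t
      unfolding expected_rank_formula[OF finE Ene t] rk c using final_bound[OF k t, of X] by simp
    thus "\<And>t. t \<ge> 1 \<Longrightarrow> \<bar>expected_rank n E X k t - ?r\<bar>
        \<le> real n powr (3/2) * phi ((?r - 1) / real n) / (c * real t)" by blast
    define C where "C = real n powr (3/2) * phi ((?r - 1) / real n) / c"
    have ev: "eventually (\<lambda>t. norm (expected_rank n E X k t - ?r) \<le> C / real t) sequentially"
    proof (rule eventually_sequentiallyI[of 1])
      fix t :: nat assume "t \<ge> 1"
      thus "norm (expected_rank n E X k t - ?r) \<le> C / real t"
        using bnd[of t] unfolding C_def by simp
    qed
    have "(\<lambda>t. expected_rank n E X k t - ?r) \<longlonglongrightarrow> 0"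
      by (rule Lim_null_comparison[OF ev lim_const_over_n])
    thus "(\<lambda>t. expected_rank n E X k t) \<longlonglongrightarrow> ?r" by (rule LIM_zero_cancel)
  qed
qed


end
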